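(* Let $n = \sum_{i=1}^{k} n_i h_i$ and suppose a holey self-orthogonal latin square HSOLS$(h_1^{n_1}\cdots h_k^{n_k})$ of order $n$ exists. Suppose moreover that for each $i \in \{1,\dots,k\}$ there exist complete mixed doubles round robin tournaments CMDRR$(h_i, m_{i1}), \dots,$ CMDRR$(h_i, m_{i n_i})$. Then there exists a CMDRR$(n, s)$, where $s = \sum_{1 \le i \le k}\sum_{1 \le j \le n_i} m_{ij}$.
   Context: A mixed doubles game is a match between two teams, each team consisting of one man and one woman; in a game $M_a F_b$ v $M_c F_d$, $M_a$ and $F_b$ are partners, $M_c$ and $F_d$ are partners, and each player of one team opposes each player of the other team. A complete mixed doubles round robin tournament CMDRR$(n,k)$ is a schedule (set) of mixed doubles games for $n$ men and $n$ women, of which $k$ men and $k$ women are paired into $k$ spouse pairs (a spouse pair is one man and one woman), such that: spouses never play in a game together as partners or opponents; every man and woman who are not spouses are partners exactly once and opponents exactly once; each player who has a spouse opposes every other player of the same sex exactly once; each player who does not have a spouse opposes some other same-sex player who does not have a spouse exactly twice and opposes all other same-sex players exactly once. By convention a CMDRR$(1,1)$ exists (one spouse pair and no games). A self-orthogonal latin square (SOLS) is a latin square orthogonal to its transpose. A holey SOLS HSOLS$(h_1^{n_1}\cdots h_k^{n_k})$ is a self-orthogonal latin square of order $n=\sum n_i h_i$ with, for each $i$, $n_i$ missing sub-SOLS (holes) of order $h_i$, the holes being disjoint and spanning (i.e. the symbol set is partitioned into the holes, and the cells indexed by pairs of rows/columns from the same hole are empty and the symbols of a hole do not occur in that hole's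 rows or columns). *)

theory Defs
  imports Main
begin

(* A game  M_a F_b v M_c F_d  is represented as ((a,b),(c,d)). Men and women of a
   CMDRR(n,_) are both numbered 0..<n; the spouse pairs form a set S of (man,woman). *)
type_synonym game = "(nat \<times> nat) \<times> (nat \<times> nat)"

definition plays_man :: "nat \<Rightarrow> game \<Rightarrow> bool" where
  "plays_man m g = (case g of ((a,b),(c,d)) \<Rightarrow> m = a \<or> m = c)"

definition plays_woman :: "nat \<Rightarrow> game \<Rightarrow> bool" where
  "plays_woman w g = (case g of ((a,b),(c,d)) \<Rightarrow> w = b \<or> w = d)"

definition partners_in :: "nat \<Rightarrow> nat \<Rightarrow> game \<Rightarrow> bool" where
  "partners_in m w g = (case g of ((a,b),(c,d)) \<Rightarrow> (m = a \<and> w = b) \<or> (m = c \<and> w = d))"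

definition opp_mw_in :: "nat \<Rightarrow> nat \<Rightarrow> game \<Rightarrow> bool" where
  "opp_mw_in m w g = (case g of ((a,b),(c,d)) \<Rightarrow> (m = a \<and> w = d) \<or> (m = c \<and> w = b))"

definition opp_men_in :: "nat \<Rightarrow> nat \<Rightarrow> game \<Rightarrow> bool" where
  "opp_men_in m m' g = (case g of ((a,b),(c,d)) \<Rightarrow> (m = a \<and> m' = c) \<or> (m = c \<and> m' = a))"

definition opp_women_in :: "nat \<Rightarrow> nat \<Rightarrow> game \<Rightarrow> bool" where
  "opp_women_in w w' g = (case g of ((a,b),(c,d)) \<Rightarrow> (w = b \<and> w' = d) \<or> (w = d \<and> w' = b))"

definition is_CMDRR :: "nat \<Rightarrow> nat \<Rightarrow> (nat \<times> nat) set \<Rightarrow> game set \<Rightarrow> bool" where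
  "is_CMDRR n k S G \<longleftrightarrow>
     finite G \<and>
     (\<forall>((a,b),(c,d)) \<in> G. a < n \<and> b < n \<and> c < n \<and> d < n \<and> a \<noteq> c \<and> b \<noteq> d) \<and>
     S \<subseteq> {0..<n} \<times> {0..<n} \<and>
     (\<forall>(m,w) \<in> S. \<forall>(m',w') \<in> S. (m = m' \<longleftrightarrow> w = w')) \<and>
     card S = k \<and>
     (\<forall>(m,w) \<in> S. \<forall>g \<in> G. \<not> (plays_man m g \<and> plays_woman w g)) \<and>
     (\<forall>m < n. \<forall>w < n. (m,w) \<notin> S \<longrightarrow>
        card {g \<in> G. partners_in m w g} = 1 \<and> card {g \<in> G. opp_mw_in m w g} = 1) \<and>
     (\<forall>m < n. m \<in> fst ` S \<longrightarrow>
        (\<forall>m' < n. m' \<noteq> m \<longrightarrow> card {g \<in> G. opp_men_in m m' g} = 1)) \<and>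
     (\<forall>w < n. w \<in> snd ` S \<longrightarrow>
        (\<forall>w' < n. w' \<noteq> w \<longrightarrow> card {g \<in> G. opp_women_in w w' g} = 1)) \<and>
     (\<forall>m < n. m \<notin> fst ` S \<longrightarrow>
        (\<exists>m' < n. m' \<noteq> m \<and> m' \<notin> fst ` S \<and> card {g \<in> G. opp_men_in m m' g} = 2 \<and>
           (\<forall>m'' < n. m'' \<noteq> m \<and> m'' \<noteq> m' \<longrightarrow> card {g \<in> G. opp_men_in m m'' g} = 1))) \<and>
     (\<forall>w < n. w \<notin> snd ` S \<longrightarrow>
        (\<exists>w' < n. w' \<noteq> w \<and> w' \<notin> snd ` S \<and> card {g \<in> G. opp_women_in w w' g} = 2 \<and>
           (\<forall>w'' < n. w'' \<noteq> w \<and> w'' \<noteq> w' \<longrightarrow> card {g \<in> G. opp_women_in w w'' g} = 1)))"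

definition CMDRR_exists :: "nat \<Rightarrow> nat \<Rightarrow> bool" where
  "CMDRR_exists n k \<longleftrightarrow> (\<exists>S G. is_CMDRR n k S G)"

(* L x y is the entry of cell (x,y); it is only meaningful for filled cells, i.e. cells
   whose row and column do not lie in a common hole. *)
definition same_hole :: "'i set \<Rightarrow> ('i \<Rightarrow> nat set) \<Rightarrow> nat \<Rightarrow> nat \<Rightarrow> bool" where
  "same_hole I Hf x y \<longleftrightarrow> (\<exists>i \<in> I. x \<in> Hf i \<and> y \<in> Hf i)"

definition is_HSOLS :: "nat set \<Rightarrow> 'i set \<Rightarrow> ('i \<Rightarrow> nat set) \<Rightarrow> (nat \<Rightarrow> nat \<Rightarrow> nat) \<Rightarrow> bool" where
  "is_HSOLS X I Hf L \<longleftrightarrow>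
     finite X \<and>
     (\<forall>i \<in> I. Hf i \<subseteq> X) \<and>
     (\<forall>i \<in> I. \<forall>j \<in> I. i \<noteq> j \<longrightarrow> Hf i \<inter> Hf j = {}) \<and>
     (\<Union>i \<in> I. Hf i) = X \<and>
     \<comment> \<open>latin property: row/column x in hole H contains each symbol of X - H exactly once\<close>
     (\<forall>i \<in> I. \<forall>x \<in> Hf i. bij_betw (\<lambda>y. L x y) (X - Hf i) (X - Hf i)) \<and>
     (\<forall>i \<in> I. \<forall>y \<in> Hf i. bij_betw (\<lambda>x. L x y) (X - Hf i) (X - Hf i)) \<and>
     \<comment> \<open>self-orthogonality: superimposing L and its transpose gives every pair of symbols
        not in a common hole exactly once\<close>
     bij_betw (\<lambda>(x,y). (L x y, L y x))
       {(x,y). x \<in> X \<and> y \<in> X \<and> \<not> same_hole I Hf x y}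
       {(u,v). u \<in> X \<and> v \<in> X \<and> \<not> same_hole I Hf u v}"

definition HSOLS_type_exists :: "nat \<Rightarrow> (nat \<Rightarrow> nat) \<Rightarrow> (nat \<Rightarrow> nat) \<Rightarrow> bool" where
  "HSOLS_type_exists k h nn \<longleftrightarrow>
     (\<exists>Hf L. is_HSOLS {0..<(\<Sum>i=1..k. nn i * h i)} {(i,j). i \<in> {1..k} \<and> j \<in> {1..nn i}} Hf L \<and>
        (\<forall>i \<in> {1..k}. \<forall>j \<in> {1..nn i}. card (Hf (i,j)) = h i))"

end

theory Submission
  imports Defs
begin

definition is_CMDRR_on :: "nat set \<Rightarrow> (nat \<times> nat) set \<Rightarrow> game set \<Rightarrow> bool" where
  "is_CMDRR_on A S G \<longleftrightarrow>
     finite G \<and>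
     (\<forall>((a,b),(c,d)) \<in> G. a \<in> A \<and> b \<in> A \<and> c \<in> A \<and> d \<in> A \<and> a \<noteq> c \<and> b \<noteq> d) \<and>
     S \<subseteq> A \<times> A \<and>
     (\<forall>(m,w) \<in> S. \<forall>(m',w') \<in> S. (m = m' \<longleftrightarrow> w = w')) \<and>
     (\<forall>(m,w) \<in> S. \<forall>g \<in> G. \<not> (plays_man m g \<and> plays_woman w g)) \<and>
     (\<forall>m \<in> A. \<forall>w \<in> A. (m,w) \<notin> S \<longrightarrow>
        card {g \<in> G. partners_in m w g} = 1 \<and> card {g \<in> G. opp_mw_in m w g} = 1) \<and>
     (\<forall>m \<in> A. m \<in> fst ` S \<longrightarrow>
        (\<forall>m' \<in> A. m' \<noteq> m \<longrightarrow> card {g \<in> G. opp_men_in m m' g} = 1)) \<and>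
     (\<forall>w \<in> A. w \<in> snd ` S \<longrightarrow>
        (\<forall>w' \<in> A. w' \<noteq> w \<longrightarrow> card {g \<in> G. opp_women_in w w' g} = 1)) \<and>
     (\<forall>m \<in> A. m \<notin> fst ` S \<longrightarrow>
        (\<exists>m' \<in> A. m' \<noteq> m \<and> m' \<notin> fst ` S \<and> card {g \<in> G. opp_men_in m m' g} = 2 \<and>
           (\<forall>m'' \<in> A. m'' \<noteq> m \<and> m'' \<noteq> m' \<longrightarrow> card {g \<in> G. opp_men_in m m'' g} = 1))) \<and>
     (\<forall>w \<in> A. w \<notin> snd ` S \<longrightarrow>
        (\<exists>w' \<in> A. w' \<noteq> w \<and> w' \<notin> snd ` S \<and> card {g \<in> G. opp_women_in w w' g} = 2 \<and>
           (\<forall>w'' \<in> A. w'' \<noteq> w \<and> w'' \<noteq> w' \<longrightarrow> card {g \<in> G. opp_women_in w w'' g} = 1)))"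

lemma CMDRR_on_iff: "is_CMDRR n k S G \<longleftrightarrow> is_CMDRR_on {0..<n} S G \<and> card S = k"
  unfolding is_CMDRR_def is_CMDRR_on_def atLeastLessThan_iff by (simp only: Ball_def Bex_def) auto

definition gmap :: "(nat \<Rightarrow> nat) \<Rightarrow> game \<Rightarrow> game" where
  "gmap f g = (case g of ((a,b),(c,d)) \<Rightarrow> ((f a, f b),(f c, f d)))"

definition gin :: "nat set \<Rightarrow> game \<Rightarrow> bool" where
  "gin A g = (case g of ((a,b),(c,d)) \<Rightarrow> a \<in> A \<and> b \<in> A \<and> c \<in> A \<and> d \<in> A)"

lemma game_cases: obtains a b c d where "g = ((a,b),(c,d))"
  by (metis prod.exhaust)

lemma gmap_preds:
  assumes "inj_on f A" "gin A g" "u \<in> A" "v \<in> A"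
  shows "partners_in (f u) (f v) (gmap f g) = partners_in u v g"
    "opp_mw_in (f u) (f v) (gmap f g) = opp_mw_in u v g"
    "opp_men_in (f u) (f v) (gmap f g) = opp_men_in u v g"
    "opp_women_in (f u) (f v) (gmap f g) = opp_women_in u v g"
    "plays_man (f u) (gmap f g) = plays_man u g"
    "plays_woman (f u) (gmap f g) = plays_woman u g"
  using assms by (cases g rule: game_cases; auto simp: gmap_def gin_def partners_in_def
      opp_mw_in_def opp_men_in_def opp_women_in_def plays_man_def plays_woman_def inj_on_eq_iff)+

lemma gmap_inj:
  assumes "inj_on f A" "\<forall>g\<in>G. gin A g"
  shows "inj_on (gmap f) G"
proof (rule inj_onI)
  fix x y assume xy: "x \<in> G" "y \<in> G" "gmap f x = gmap f y"
  have "gin A x" "gin A y" using xy assms by auto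
  then show "x = y" using xy assms(1)
    by (cases x rule: game_cases; cases y rule: game_cases; auto simp: gmap_def gin_def inj_on_def)
qed

lemma card_transfer:
  assumes "inj_on (gmap f) G" "\<And>g. g \<in> G \<Longrightarrow> Q2 (gmap f g) = Q1 g"
  shows "card {g \<in> gmap f ` G. Q2 g} = card {g \<in> G. Q1 g}"
proof -
  have "{g \<in> gmap f ` G. Q2 g} = gmap f ` {g \<in> G. Q1 g}" using assms(2) by auto
  then show ?thesis using card_image[OF inj_on_subset[OF assms(1)]] by auto
qed

lemma transfer:
  assumes H: "is_CMDRR_on A S G" and inj: "inj_on f A"
  shows "is_CMDRR_on (f ` A) (map_prod f f ` S) (gmap f ` G)"
proof -
  note H' = H[unfolded is_CMDRR_on_def]
  have fin: "finite G" by (insert H, unfold is_CMDRR_on_def, elim conjE, assumption)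
  have Gent: "\<forall>((a,b),(c,d)) \<in> G. a \<in> A \<and> b \<in> A \<and> c \<in> A \<and> d \<in> A \<and> a \<noteq> c \<and> b \<noteq> d" by (insert H, unfold is_CMDRR_on_def, elim conjE, assumption)
  have gin: "\<forall>g\<in>G. gin A g" using Gent by (auto simp: gin_def)
  have SA: "S \<subseteq> A \<times> A" by (insert H, unfold is_CMDRR_on_def, elim conjE, assumption)
  have Sm: "\<forall>(m,w) \<in> S. \<forall>(m',w') \<in> S. (m = m' \<longleftrightarrow> w = w')" by (insert H, unfold is_CMDRR_on_def, elim conjE, assumption)
  have Sp: "\<forall>(m,w) \<in> S. \<forall>g \<in> G. \<not> (plays_man m g \<and> plays_woman w g)" by (insert H, unfold is_CMDRR_on_def, elim conjE, assumption)
  have C1: "\<forall>m \<in> A. \<forall>w \<in> A. (m,w) \<notin> S \<longrightarrow>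
        card {g \<in> G. partners_in m w g} = 1 \<and> card {g \<in> G. opp_mw_in m w g} = 1" by (insert H, unfold is_CMDRR_on_def, elim conjE, assumption)
  have C2: "\<forall>m \<in> A. m \<in> fst ` S \<longrightarrow>
        (\<forall>m' \<in> A. m' \<noteq> m \<longrightarrow> card {g \<in> G. opp_men_in m m' g} = 1)" by (insert H, unfold is_CMDRR_on_def, elim conjE, assumption)
  have C3: "\<forall>w \<in> A. w \<in> snd ` S \<longrightarrow>
        (\<forall>w' \<in> A. w' \<noteq> w \<longrightarrow> card {g \<in> G. opp_women_in w w' g} = 1)" by (insert H, unfold is_CMDRR_on_def, elim conjE, assumption)
  have C4: "\<forall>m \<in> A. m \<notin> fst ` S \<longrightarrow>
        (\<exists>m' \<in> A. m' \<noteq> m \<and> m' \<notin> fst ` S \<and> card {g \<in> G. opp_men_in m m' g} = 2 \<and>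
           (\<forall>m'' \<in> A. m'' \<noteq> m \<and> m'' \<noteq> m' \<longrightarrow> card {g \<in> G. opp_men_in m m'' g} = 1))" by (insert H, unfold is_CMDRR_on_def, elim conjE, assumption)
  have C5: "\<forall>w \<in> A. w \<notin> snd ` S \<longrightarrow>
        (\<exists>w' \<in> A. w' \<noteq> w \<and> w' \<notin> snd ` S \<and> card {g \<in> G. opp_women_in w w' g} = 2 \<and>
           (\<forall>w'' \<in> A. w'' \<noteq> w \<and> w'' \<noteq> w' \<longrightarrow> card {g \<in> G. opp_women_in w w'' g} = 1))" by (insert H, unfold is_CMDRR_on_def, elim conjE, assumption)
  have ginj: "inj_on (gmap f) G" using gmap_inj[OF inj gin] .
  have ct: "card {g \<in> gmap f ` G. Q (f u) (f v) g} = card {g \<in> G. Q u v g}"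
    if "u \<in> A" "v \<in> A" "\<And>g. g \<in> G \<Longrightarrow> Q (f u) (f v) (gmap f g) = Q u v g" for Q u v
    using card_transfer[OF ginj, of "Q (f u) (f v)" "Q u v"] that by blast
  have ctP: "card {g \<in> gmap f ` G. partners_in (f u) (f v) g} = card {g \<in> G. partners_in u v g}"
     and ctO: "card {g \<in> gmap f ` G. opp_mw_in (f u) (f v) g} = card {g \<in> G. opp_mw_in u v g}"
     and ctM: "card {g \<in> gmap f ` G. opp_men_in (f u) (f v) g} = card {g \<in> G. opp_men_in u v g}"
     and ctW: "card {g \<in> gmap f ` G. opp_women_in (f u) (f v) g} = card {g \<in> G. opp_women_in u v g}"
    if "u \<in> A" "v \<in> A" for u v
    using ct[OF that] gmap_preds[OF inj _ that] gin by auto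
  have fstS: "fst ` map_prod f f ` S = f ` fst ` S" by force
  have sndS: "snd ` map_prod f f ` S = f ` snd ` S" by force
  have fS: "fst ` S \<subseteq> A" "snd ` S \<subseteq> A" using SA by auto
  have memS: "(f u, f v) \<in> map_prod f f ` S \<longleftrightarrow> (u,v) \<in> S" if "u \<in> A" "v \<in> A" for u v
    using that SA inj by (auto simp: inj_on_eq_iff)
  show ?thesis
    unfolding is_CMDRR_on_def
  proof (intro conjI)
    show "finite (gmap f ` G)" using fin by simp
    show "\<forall>((a,b),(c,d)) \<in> gmap f ` G. a \<in> f ` A \<and> b \<in> f ` A \<and> c \<in> f ` A \<and> d \<in> f ` A \<and> a \<noteq> c \<and> b \<noteq> d"
      using Gent inj by (fastforce simp: gmap_def inj_on_eq_iff)
    show "map_prod f f ` S \<subseteq> f ` A \<times> f ` A" using SA by auto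
    show "\<forall>(m,w) \<in> map_prod f f ` S. \<forall>(m',w') \<in> map_prod f f ` S. (m = m' \<longleftrightarrow> w = w')"
    proof -
      have *: "(f a = f c) = (f b = f d)" if "(a,b)\<in>S" "(c,d)\<in>S" for a b c d
      proof -
        have "a\<in>A" "b\<in>A" "c\<in>A" "d\<in>A" using that SA by auto
        then have "(f a = f c) = (a = c)" "(f b = f d) = (b=d)" using inj by (auto simp: inj_on_eq_iff)
        moreover have "(a=c) = (b=d)" using Sm that by blast
        ultimately show ?thesis by simp
      qed
      show ?thesis by (auto simp: *)
    qed
    show "\<forall>(m,w) \<in> map_prod f f ` S. \<forall>g \<in> gmap f ` G. \<not> (plays_man m g \<and> plays_woman w g)"
      using Sp SA gin gmap_preds(5,6)[OF inj] by fastforce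
    show "\<forall>m \<in> f ` A. \<forall>w \<in> f ` A. (m,w) \<notin> map_prod f f ` S \<longrightarrow>
        card {g \<in> gmap f ` G. partners_in m w g} = 1 \<and> card {g \<in> gmap f ` G. opp_mw_in m w g} = 1"
      using C1 ctP ctO memS by auto
    show "\<forall>m \<in> f ` A. m \<in> fst ` map_prod f f ` S \<longrightarrow>
        (\<forall>m' \<in> f ` A. m' \<noteq> m \<longrightarrow> card {g \<in> gmap f ` G. opp_men_in m m' g} = 1)"
      unfolding fstS using C2 ctM fS inj by (auto simp: inj_on_image_mem_iff)
    show "\<forall>w \<in> f ` A. w \<in> snd ` map_prod f f ` S \<longrightarrow>
        (\<forall>w' \<in> f ` A. w' \<noteq> w \<longrightarrow> card {g \<in> gmap f ` G. opp_women_in w w' g} = 1)"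
      unfolding sndS using C3 ctW fS inj by (auto simp: inj_on_image_mem_iff)
    show "\<forall>m \<in> f ` A. m \<notin> fst ` map_prod f f ` S \<longrightarrow>
        (\<exists>m' \<in> f ` A. m' \<noteq> m \<and> m' \<notin> fst ` map_prod f f ` S \<and> card {g \<in> gmap f ` G. opp_men_in m m' g} = 2 \<and>
           (\<forall>m'' \<in> f ` A. m'' \<noteq> m \<and> m'' \<noteq> m' \<longrightarrow> card {g \<in> gmap f ` G. opp_men_in m m'' g} = 1))"
    proof (intro ballI impI)
      fix m assume "m \<in> f ` A" "m \<notin> fst ` map_prod f f ` S"
      then obtain u where u: "u \<in> A" "m = f u" "u \<notin> fst ` S" unfolding fstS by auto
      then obtain u' where u': "u' \<in> A" "u' \<noteq> u" "u' \<notin> fst ` S" "card {g \<in> G. opp_men_in u u' g} = 2"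
        "\<forall>m'' \<in> A. m'' \<noteq> u \<and> m'' \<noteq> u' \<longrightarrow> card {g \<in> G. opp_men_in u m'' g} = 1"
        using C4 by blast
      show "\<exists>m' \<in> f ` A. m' \<noteq> m \<and> m' \<notin> fst ` map_prod f f ` S \<and> card {g \<in> gmap f ` G. opp_men_in m m' g} = 2 \<and>
           (\<forall>m'' \<in> f ` A. m'' \<noteq> m \<and> m'' \<noteq> m' \<longrightarrow> card {g \<in> gmap f ` G. opp_men_in m m'' g} = 1)"
        apply (rule bexI[of _ "f u'"])
        using u u' ctM fS inj unfolding fstS by (auto simp: inj_on_image_mem_iff inj_on_eq_iff)
    qed
    show "\<forall>w \<in> f ` A. w \<notin> snd ` map_prod f f ` S \<longrightarrow>
        (\<exists>w' \<in> f ` A. w' \<noteq> w \<and> w' \<notin> snd ` map_prod f f ` S \<and> card {g \<in> gmap f ` G. opp_women_in w w' g} = 2 \<and>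
           (\<forall>w'' \<in> f ` A. w'' \<noteq> w \<and> w'' \<noteq> w' \<longrightarrow> card {g \<in> gmap f ` G. opp_women_in w w'' g} = 1))"
    proof (intro ballI impI)
      fix m assume "m \<in> f ` A" "m \<notin> snd ` map_prod f f ` S"
      then obtain u where u: "u \<in> A" "m = f u" "u \<notin> snd ` S" unfolding sndS by auto
      then obtain u' where u': "u' \<in> A" "u' \<noteq> u" "u' \<notin> snd ` S" "card {g \<in> G. opp_women_in u u' g} = 2"
        "\<forall>m'' \<in> A. m'' \<noteq> u \<and> m'' \<noteq> u' \<longrightarrow> card {g \<in> G. opp_women_in u m'' g} = 1"
        using C5 by blast
      show "\<exists>w' \<in> f ` A. w' \<noteq> m \<and> w' \<notin> snd ` map_prod f f ` S \<and> card {g \<in> gmap f ` G. opp_women_in m w' g} = 2 \<and>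
           (\<forall>w'' \<in> f ` A. w'' \<noteq> m \<and> w'' \<noteq> w' \<longrightarrow> card {g \<in> gmap f ` G. opp_women_in m w'' g} = 1)"
        apply (rule bexI[of _ "f u'"])
        using u u' ctW fS inj unfolding sndS by (auto simp: inj_on_image_mem_iff inj_on_eq_iff)
    qed
  qed
qed


lemma is_CMDRR_onD:
  assumes H: "is_CMDRR_on A S G"
  shows "finite G"
  and "\<forall>((a,b),(c,d)) \<in> G. a \<in> A \<and> b \<in> A \<and> c \<in> A \<and> d \<in> A \<and> a \<noteq> c \<and> b \<noteq> d"
  and "S \<subseteq> A \<times> A"
  and "\<forall>(m,w) \<in> S. \<forall>(m',w') \<in> S. (m = m' \<longleftrightarrow> w = w')"
  and "\<forall>(m,w) \<in> S. \<forall>g \<in> G. \<not> (plays_man m g \<and> plays_woman w g)"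
  and "\<forall>m \<in> A. \<forall>w \<in> A. (m,w) \<notin> S \<longrightarrow>
        card {g \<in> G. partners_in m w g} = 1 \<and> card {g \<in> G. opp_mw_in m w g} = 1"
  and "\<forall>m \<in> A. m \<in> fst ` S \<longrightarrow>
        (\<forall>m' \<in> A. m' \<noteq> m \<longrightarrow> card {g \<in> G. opp_men_in m m' g} = 1)"
  and "\<forall>w \<in> A. w \<in> snd ` S \<longrightarrow>
        (\<forall>w' \<in> A. w' \<noteq> w \<longrightarrow> card {g \<in> G. opp_women_in w w' g} = 1)"
  and "\<forall>m \<in> A. m \<notin> fst ` S \<longrightarrow>
        (\<exists>m' \<in> A. m' \<noteq> m \<and> m' \<notin> fst ` S \<and> card {g \<in> G. opp_men_in m m' g} = 2 \<and>
           (\<forall>m'' \<in> A. m'' \<noteq> m \<and> m'' \<noteq> m' \<longrightarrow> card {g \<in> G. opp_men_in m m'' g} = 1))"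
  and "\<forall>w \<in> A. w \<notin> snd ` S \<longrightarrow>
        (\<exists>w' \<in> A. w' \<noteq> w \<and> w' \<notin> snd ` S \<and> card {g \<in> G. opp_women_in w w' g} = 2 \<and>
           (\<forall>w'' \<in> A. w'' \<noteq> w \<and> w'' \<noteq> w' \<longrightarrow> card {g \<in> G. opp_women_in w w'' g} = 1))"
  by (insert H, unfold is_CMDRR_on_def, elim conjE, assumption)+

definition gset :: "game \<Rightarrow> nat set" where
  "gset g = (case g of ((a,b),(c,d)) \<Rightarrow> {a,b,c,d})"

lemma gset_preds:
  "partners_in u v g \<Longrightarrow> u \<in> gset g \<and> v \<in> gset g"
  "opp_mw_in u v g \<Longrightarrow> u \<in> gset g \<and> v \<in> gset g"
  "opp_men_in u v g \<Longrightarrow> u \<in> gset g \<and> v \<in> gset g"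
  "opp_women_in u v g \<Longrightarrow> u \<in> gset g \<and> v \<in> gset g"
  "plays_man u g \<Longrightarrow> u \<in> gset g"
  "plays_woman u g \<Longrightarrow> u \<in> gset g"
  by (cases g rule: game_cases; auto simp: gset_def partners_in_def
      opp_mw_in_def opp_men_in_def opp_women_in_def plays_man_def plays_woman_def)+

definition out :: "(nat \<Rightarrow> nat \<Rightarrow> nat) \<Rightarrow> nat \<Rightarrow> nat \<Rightarrow> game" where
  "out L x y = (if x < y then ((x, L x y),(y, L y x)) else ((y, L y x),(x, L x y)))"

lemma out_sym: "x \<noteq> y \<Longrightarrow> out L x y = out L y x"
  unfolding out_def by auto

lemma out_preds:
  "partners_in m w (out L x y) \<longleftrightarrow> (m=x \<and> w=L x y) \<or> (m=y \<and> w=L y x)"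
  "opp_mw_in m w (out L x y) \<longleftrightarrow> (m=x \<and> w=L y x) \<or> (m=y \<and> w=L x y)"
  "opp_men_in m m' (out L x y) \<longleftrightarrow> (m=x \<and> m'=y) \<or> (m=y \<and> m'=x)"
  "opp_women_in u v (out L x y) \<longleftrightarrow> (u=L x y \<and> v=L y x) \<or> (u=L y x \<and> v=L x y)"
  "plays_man m (out L x y) \<longleftrightarrow> m=x \<or> m=y"
  "plays_woman w (out L x y) \<longleftrightarrow> w=L x y \<or> w=L y x"
  unfolding out_def partners_in_def opp_mw_in_def opp_men_in_def opp_women_in_def
    plays_man_def plays_woman_def by auto

locale comb =
  fixes X :: "nat set" and I :: "'i set" and Hf :: "'i \<Rightarrow> nat set" and L :: "nat \<Rightarrow> nat \<Rightarrow> nat"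
    and S :: "'i \<Rightarrow> (nat\<times>nat) set" and G :: "'i \<Rightarrow> game set"
  assumes hs: "is_HSOLS X I Hf L" and finI: "finite I"
    and sub: "\<And>t. t \<in> I \<Longrightarrow> is_CMDRR_on (Hf t) (S t) (G t)"
begin

lemma finX: "finite X" and HX: "t\<in>I \<Longrightarrow> Hf t \<subseteq> X"
  and disj: "t\<in>I \<Longrightarrow> t'\<in>I \<Longrightarrow> t\<noteq>t' \<Longrightarrow> Hf t \<inter> Hf t' = {}"
  and cov: "(\<Union>t\<in>I. Hf t) = X"
  and row: "t\<in>I \<Longrightarrow> x\<in>Hf t \<Longrightarrow> bij_betw (L x) (X - Hf t) (X - Hf t)"
  and col: "t\<in>I \<Longrightarrow> y\<in>Hf t \<Longrightarrow> bij_betw (\<lambda>x. L x y) (X - Hf t) (X - Hf t)"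
  and orth: "bij_betw (\<lambda>(x,y). (L x y, L y x)) {(x,y). x\<in>X \<and> y\<in>X \<and> \<not> same_hole I Hf x y}
       {(u,v). u\<in>X \<and> v\<in>X \<and> \<not> same_hole I Hf u v}"
proof -
  note H = hs[unfolded is_HSOLS_def]
  show "finite X" using H by (elim conjE)
  show "t\<in>I \<Longrightarrow> Hf t \<subseteq> X" using H by (elim conjE) (erule bspec)
  show "t\<in>I \<Longrightarrow> t'\<in>I \<Longrightarrow> t\<noteq>t' \<Longrightarrow> Hf t \<inter> Hf t' = {}" using H by (elim conjE) blast
  show "(\<Union>t\<in>I. Hf t) = X" using H by (elim conjE)
  show "t\<in>I \<Longrightarrow> x\<in>Hf t \<Longrightarrow> bij_betw (L x) (X - Hf t) (X - Hf t)" using H by (elim conjE) blast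
  show "t\<in>I \<Longrightarrow> y\<in>Hf t \<Longrightarrow> bij_betw (\<lambda>x. L x y) (X - Hf t) (X - Hf t)" using H by (elim conjE) blast
  show "bij_betw (\<lambda>(x,y). (L x y, L y x)) {(x,y). x\<in>X \<and> y\<in>X \<and> \<not> same_hole I Hf x y}
       {(u,v). u\<in>X \<and> v\<in>X \<and> \<not> same_hole I Hf u v}" using H by (elim conjE)
qed

definition hole where "hole x = (THE t. t\<in>I \<and> x\<in>Hf t)"

lemma hole_eq: assumes t: "t\<in>I" "x\<in>Hf t" shows "hole x = t"
  unfolding hole_def
proof (rule the_equality)
  show "t \<in> I \<and> x \<in> Hf t" using t by simp
  fix t' assume "t'\<in>I \<and> x\<in>Hf t'"
  then show "t' = t" using disj[of t' t] t by blast
qed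

lemma hole: assumes x: "x\<in>X" shows "hole x \<in> I \<and> x \<in> Hf (hole x)"
proof -
  obtain t where "t\<in>I" "x\<in>Hf t" using cov x by blast
  then show ?thesis using hole_eq by simp
qed

lemma same_hole_iff: assumes "x\<in>X" "y\<in>X" shows "same_hole I Hf x y \<longleftrightarrow> hole x = hole y"
proof
  assume "same_hole I Hf x y"
  then obtain t where "t\<in>I" "x\<in>Hf t" "y\<in>Hf t" unfolding same_hole_def by blast
  then show "hole x = hole y" using hole_eq by simp
next
  assume "hole x = hole y"
  then show "same_hole I Hf x y" unfolding same_hole_def using hole[OF assms(1)] hole[OF assms(2)] by auto
qed

lemma notin_hole: assumes x: "x\<in>X" shows "z \<in> X - Hf (hole x) \<longleftrightarrow> z\<in>X \<and> hole z \<noteq> hole x"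
proof
  assume "z \<in> X - Hf (hole x)"
  moreover have "hole z = hole x" if "z \<in> Hf (hole x)" using hole_eq[OF _ that] hole[OF x] by simp
  ultimately show "z\<in>X \<and> hole z \<noteq> hole x" using hole[of z] by auto
next
  assume "z\<in>X \<and> hole z \<noteq> hole x"
  then have "z\<in>X" "hole z = hole x \<Longrightarrow> False" by auto
  moreover have "z \<in> Hf (hole z)" using hole[of z] \<open>z\<in>X\<close> by simp
  ultimately show "z \<in> X - Hf (hole x)" by (metis DiffI hole_eq hole[OF x])
qed

definition P where "P = {(x,y). x\<in>X \<and> y\<in>X \<and> hole x \<noteq> hole y}"

lemma orthP: "bij_betw (\<lambda>(x,y). (L x y, L y x)) P P"
proof -
  have "{(x,y). x\<in>X \<and> y\<in>X \<and> \<not> same_hole I Hf x y} = P" unfolding P_def using same_hole_iff by auto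
  then show ?thesis using orth by simp
qed

lemma rowX: "x\<in>X \<Longrightarrow> bij_betw (L x) {z. z\<in>X \<and> hole z \<noteq> hole x} {z. z\<in>X \<and> hole z \<noteq> hole x}"
proof -
  assume x: "x\<in>X"
  have "X - Hf (hole x) = {z. z\<in>X \<and> hole z \<noteq> hole x}" using notin_hole[OF x] by blast
  then show ?thesis using row[of "hole x" x] hole[OF x] by simp
qed

lemma colX: "y\<in>X \<Longrightarrow> bij_betw (\<lambda>x. L x y) {z. z\<in>X \<and> hole z \<noteq> hole y} {z. z\<in>X \<and> hole z \<noteq> hole y}"
proof -
  assume x: "y\<in>X"
  have "X - Hf (hole y) = {z. z\<in>X \<and> hole z \<noteq> hole y}" using notin_hole[OF x] by blast
  then show ?thesis using col[of "hole y" y] hole[OF x] by simp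
qed

lemma LP:
  assumes "(x,y) \<in> P"
  shows "L x y \<in> X" "hole (L x y) \<noteq> hole x" "hole (L x y) \<noteq> hole y" "hole (L x y) \<noteq> hole (L y x)"
    "x \<noteq> y" "L x y \<noteq> L y x" "(y,x) \<in> P"
proof -
  have x: "x\<in>X" and y: "y\<in>X" and hxy: "hole x \<noteq> hole y" using assms unfolding P_def by auto
  have 1: "L x y \<in> {z. z\<in>X \<and> hole z \<noteq> hole x}" using rowX[OF x] y hxy unfolding bij_betw_def by auto
  have 2: "L x y \<in> {z. z\<in>X \<and> hole z \<noteq> hole y}" using colX[OF y] x hxy unfolding bij_betw_def by auto
  have 3: "(L x y, L y x) \<in> P" using orthP assms unfolding bij_betw_def by auto
  show "L x y \<in> X" "hole (L x y) \<noteq> hole x" "hole (L x y) \<noteq> hole y" "hole (L x y) \<noteq> hole (L y x)"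
    using 1 2 3 unfolding P_def by auto
  show "x \<noteq> y" "L x y \<noteq> L y x" "(y,x) \<in> P" using hxy 3 assms unfolding P_def by auto
qed

end


context comb
begin

definition "Sall = (\<Union>t\<in>I. S t)"
definition "Gin = (\<Union>t\<in>I. G t)"
definition "Gout = (\<lambda>(x,y). out L x y) ` P"
definition "Gall = Gin \<union> Gout"

lemma Gin_gset: assumes "t\<in>I" "g \<in> G t" shows "gset g \<subseteq> Hf t"
proof -
  obtain a b c d where g: "g = ((a,b),(c,d))" by (rule game_cases)
  have "\<forall>((a,b),(c,d)) \<in> G t. a \<in> Hf t \<and> b \<in> Hf t \<and> c \<in> Hf t \<and> d \<in> Hf t \<and> a \<noteq> c \<and> b \<noteq> d"
    using is_CMDRR_onD(2)[OF sub[OF assms(1)]] .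
  then have "a \<in> Hf t \<and> b \<in> Hf t \<and> c \<in> Hf t \<and> d \<in> Hf t" using assms(2) unfolding g by fastforce
  then show ?thesis unfolding g gset_def by simp
qed

lemma S_sub: "t\<in>I \<Longrightarrow> S t \<subseteq> Hf t \<times> Hf t"
  using is_CMDRR_onD(3)[OF sub] by blast

lemma inner_same:
  assumes "\<And>g. Q g \<Longrightarrow> u \<in> gset g" "t0\<in>I" "u\<in>Hf t0"
  shows "{g\<in>Gin. Q g} = {g\<in>G t0. Q g}"
proof
  show "{g\<in>G t0. Q g} \<subseteq> {g\<in>Gin. Q g}" using assms(2) unfolding Gin_def by auto
  show "{g\<in>Gin. Q g} \<subseteq> {g\<in>G t0. Q g}"
  proof clarify
    fix g assume g: "g\<in>Gin" "Q g"
    then obtain t where t: "t\<in>I" "g\<in>G t" unfolding Gin_def by auto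
    have "u \<in> Hf t" using Gin_gset[OF t] assms(1)[OF g(2)] by auto
    then have "t = t0" using disj[OF t(1) assms(2)] assms(3) by auto
    then show "g \<in> G t0" using t by simp
  qed
qed

lemma inner_diff:
  assumes "\<And>g. Q g \<Longrightarrow> u \<in> gset g \<and> v \<in> gset g" "hole u \<noteq> hole v"
  shows "{g\<in>Gin. Q g} = {}"
proof -
  have False if g: "g\<in>Gin" "Q g" for g
  proof -
    obtain t where t: "t\<in>I" "g\<in>G t" using g unfolding Gin_def by auto
    have "u \<in> Hf t" "v \<in> Hf t" using Gin_gset[OF t] assms(1)[OF g(2)] by auto
    then show False using hole_eq[OF t(1)] assms(2) by simp
  qed
  then show ?thesis by blast
qed

lemma out_same_pw:
  assumes "hole u = hole v" "(x,y)\<in>P"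
  shows "\<not> partners_in u v (out L x y)" "\<not> opp_mw_in u v (out L x y)"
    "\<not> opp_men_in u v (out L x y)" "\<not> opp_women_in u v (out L x y)"
  using assms LP[OF assms(2)] LP[OF LP(7)[OF assms(2)]] by (auto simp: out_preds P_def)

lemma out_same:
  assumes "hole u = hole v"
  shows "{g\<in>Gout. partners_in u v g} = {}" "{g\<in>Gout. opp_mw_in u v g} = {}"
    "{g\<in>Gout. opp_men_in u v g} = {}" "{g\<in>Gout. opp_women_in u v g} = {}"
  using out_same_pw[OF assms] unfolding Gout_def by auto

lemma outP: "(x,y) \<in> P \<Longrightarrow> out L x y \<in> Gout"
  unfolding Gout_def by (rule image_eqI[where x="(x,y)"]) simp_all

lemma out_diff_partners:
  assumes u: "u\<in>X" "w\<in>X" "hole u \<noteq> hole w"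
  shows "card {g\<in>Gout. partners_in u w g} = 1"
proof -
  let ?A = "{z. z\<in>X \<and> hole z \<noteq> hole u}"
  have w: "w \<in> ?A" using assms by auto
  obtain y0 where y0: "y0 \<in> ?A" "L u y0 = w"
    using rowX[OF u(1)] w unfolding bij_betw_def by (metis (no_types, lifting) imageE)
  have uniq: "y = y0" if "y \<in> ?A" "L u y = w" for y
    using rowX[OF u(1)] y0 that unfolding bij_betw_def inj_on_def by auto
  have "{g\<in>Gout. partners_in u w g} = {out L u y0}"
  proof (intro equalityI subsetI)
    fix g assume "g \<in> {g\<in>Gout. partners_in u w g}"
    then obtain x y where xy: "(x,y)\<in>P" "g = out L x y" "partners_in u w (out L x y)" unfolding Gout_def by auto
    from xy(3) have "(u=x \<and> w=L x y) \<or> (u=y \<and> w=L y x)" by (simp add: out_preds)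
    then show "g \<in> {out L u y0}"
    proof
      assume h: "u=x \<and> w=L x y"
      then have "y = y0" using uniq xy(1) unfolding P_def by auto
      then show ?thesis using xy h by simp
    next
      assume h: "u=y \<and> w=L y x"
      then have "x = y0" using uniq xy(1) unfolding P_def by auto
      then show ?thesis using xy h out_sym[OF LP(5)[OF xy(1)]] by simp
    qed
  next
    fix g assume "g \<in> {out L u y0}"
    moreover have "(u,y0)\<in>P" using y0 u unfolding P_def by auto
    ultimately show "g \<in> {g\<in>Gout. partners_in u w g}" using outP y0 by (auto simp: out_preds)
  qed
  then show ?thesis by simp
qed

lemma out_diff_oppmw:
  assumes u: "u\<in>X" "w\<in>X" "hole u \<noteq> hole w"
  shows "card {g\<in>Gout. opp_mw_in u w g} = 1"
proof -
  let ?A = "{z. z\<in>X \<and> hole z \<noteq> hole u}"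
  have w: "w \<in> ?A" using assms by auto
  obtain x0 where x0: "x0 \<in> ?A" "L x0 u = w"
    using colX[OF u(1)] w unfolding bij_betw_def by (metis (no_types, lifting) imageE)
  have uniq: "y = x0" if "y \<in> ?A" "L y u = w" for y
    using colX[OF u(1)] x0 that unfolding bij_betw_def inj_on_def by auto
  have "{g\<in>Gout. opp_mw_in u w g} = {out L x0 u}"
  proof (intro equalityI subsetI)
    fix g assume "g \<in> {g\<in>Gout. opp_mw_in u w g}"
    then obtain x y where xy: "(x,y)\<in>P" "g = out L x y" "opp_mw_in u w (out L x y)" unfolding Gout_def by auto
    from xy(3) have "(u=x \<and> w=L y x) \<or> (u=y \<and> w=L x y)" by (simp add: out_preds)
    then show "g \<in> {out L x0 u}"
    proof
      assume h: "u=x \<and> w=L y x"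
      then have "y = x0" using uniq xy(1) unfolding P_def by auto
      then show ?thesis using xy h out_sym[OF LP(5)[OF xy(1)]] by simp
    next
      assume h: "u=y \<and> w=L x y"
      then have "x = x0" using uniq xy(1) unfolding P_def by auto
      then show ?thesis using xy h by simp
    qed
  next
    fix g assume "g \<in> {out L x0 u}"
    moreover have "(x0,u)\<in>P" using x0 u unfolding P_def by auto
    ultimately show "g \<in> {g\<in>Gout. opp_mw_in u w g}" using outP x0 by (auto simp: out_preds)
  qed
  then show ?thesis by simp
qed

lemma out_diff_oppmen:
  assumes u: "u\<in>X" "v\<in>X" "hole u \<noteq> hole v"
  shows "card {g\<in>Gout. opp_men_in u v g} = 1"
proof -
  have uv: "(u,v) \<in> P" using assms unfolding P_def by auto
  have "{g\<in>Gout. opp_men_in u v g} = {out L u v}"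
  proof (intro equalityI subsetI)
    fix g assume "g \<in> {g\<in>Gout. opp_men_in u v g}"
    then obtain x y where xy: "(x,y)\<in>P" "g = out L x y" "opp_men_in u v (out L x y)" unfolding Gout_def by auto
    from xy(3) have "(u=x \<and> v=y) \<or> (u=y \<and> v=x)" by (simp add: out_preds)
    then show "g \<in> {out L u v}"
    proof
      assume h: "u=x \<and> v=y"
      then show ?thesis using xy by simp
    next
      assume h: "u=y \<and> v=x"
      then show ?thesis using xy h out_sym[OF LP(5)[OF xy(1)]] by simp
    qed
  next
    fix g assume "g \<in> {out L u v}"
    then show "g \<in> {g\<in>Gout. opp_men_in u v g}" using outP[OF uv] by (auto simp: out_preds)
  qed
  then show ?thesis by simp
qed

lemma out_diff_oppwomen:
  assumes u: "u\<in>X" "v\<in>X" "hole u \<noteq> hole v"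
  shows "card {g\<in>Gout. opp_women_in u v g} = 1"
proof -
  have uv: "(u,v) \<in> P" using assms unfolding P_def by auto
  obtain p0 where p0: "p0 \<in> P" "(\<lambda>(x,y). (L x y, L y x)) p0 = (u,v)"
    using orthP uv unfolding bij_betw_def by (metis (no_types, lifting) imageE)
  obtain x0 y0 where pp: "p0 = (x0,y0)" by (cases p0)
  have x0: "(x0,y0) \<in> P" "L x0 y0 = u" "L y0 x0 = v" using p0 pp by auto
  have uniq: "(x,y) = (x0,y0)" if "(x,y) \<in> P" "L x y = u" "L y x = v" for x y
  proof -
    have "inj_on (\<lambda>(x,y). (L x y, L y x)) P" using orthP unfolding bij_betw_def by simp
    then show ?thesis using that x0 unfolding inj_on_def by fastforce
  qed
  have "{g\<in>Gout. opp_women_in u v g} = {out L x0 y0}"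
  proof (intro equalityI subsetI)
    fix g assume "g \<in> {g\<in>Gout. opp_women_in u v g}"
    then obtain x y where xy: "(x,y)\<in>P" "g = out L x y" "opp_women_in u v (out L x y)" unfolding Gout_def by auto
    from xy(3) have "(u=L x y \<and> v=L y x) \<or> (u=L y x \<and> v=L x y)" by (simp add: out_preds)
    then show "g \<in> {out L x0 y0}"
    proof
      assume h: "u=L x y \<and> v=L y x"
      then have "(x,y) = (x0,y0)" using uniq xy(1) by auto
      then show ?thesis using xy by simp
    next
      assume h: "u=L y x \<and> v=L x y"
      then have "(y,x) = (x0,y0)" using uniq LP(7)[OF xy(1)] by auto
      then show ?thesis using xy h out_sym[OF LP(5)[OF xy(1)]] by simp
    qed
  next
    fix g assume "g \<in> {out L x0 y0}"
    then show "g \<in> {g\<in>Gout. opp_women_in u v g}" using outP[OF x0(1)] x0 by (auto simp: out_preds)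
  qed
  then show ?thesis by simp
qed

lemma all_split: "{g\<in>Gall. Q g} = {g\<in>Gin. Q g} \<union> {g\<in>Gout. Q g}"
  unfolding Gall_def by auto

lemma same_all:
  assumes "u\<in>X" "v\<in>X" "hole u = hole v"
  shows "{g\<in>Gall. partners_in u v g} = {g\<in>G (hole u). partners_in u v g}"
    "{g\<in>Gall. opp_mw_in u v g} = {g\<in>G (hole u). opp_mw_in u v g}"
    "{g\<in>Gall. opp_men_in u v g} = {g\<in>G (hole u). opp_men_in u v g}"
    "{g\<in>Gall. opp_women_in u v g} = {g\<in>G (hole u). opp_women_in u v g}"
proof -
  have h: "hole u \<in> I" "u \<in> Hf (hole u)" using hole[OF assms(1)] by auto
  show "{g\<in>Gall. partners_in u v g} = {g\<in>G (hole u). partners_in u v g}"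
    unfolding all_split out_same[OF assms(3)] using inner_same[OF _ h] gset_preds(1) by simp
  show "{g\<in>Gall. opp_mw_in u v g} = {g\<in>G (hole u). opp_mw_in u v g}"
    unfolding all_split out_same[OF assms(3)] using inner_same[OF _ h] gset_preds(2) by simp
  show "{g\<in>Gall. opp_men_in u v g} = {g\<in>G (hole u). opp_men_in u v g}"
    unfolding all_split out_same[OF assms(3)] using inner_same[OF _ h] gset_preds(3) by simp
  show "{g\<in>Gall. opp_women_in u v g} = {g\<in>G (hole u). opp_women_in u v g}"
    unfolding all_split out_same[OF assms(3)] using inner_same[OF _ h] gset_preds(4) by simp
qed

lemma diff_all:
  assumes "u\<in>X" "v\<in>X" "hole u \<noteq> hole v"
  shows "card {g\<in>Gall. partners_in u v g} = 1"
    "card {g\<in>Gall. opp_mw_in u v g} = 1"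
    "card {g\<in>Gall. opp_men_in u v g} = 1"
    "card {g\<in>Gall. opp_women_in u v g} = 1"
proof -
  show "card {g\<in>Gall. partners_in u v g} = 1"
  proof -
    have e: "{g\<in>Gin. partners_in u v g} = {}" using inner_diff[of "partners_in u v" u v] gset_preds(1) assms(3) by blast
    show ?thesis unfolding all_split e using out_diff_partners[OF assms] by simp
  qed
  show "card {g\<in>Gall. opp_mw_in u v g} = 1"
  proof -
    have e: "{g\<in>Gin. opp_mw_in u v g} = {}" using inner_diff[of "opp_mw_in u v" u v] gset_preds(2) assms(3) by blast
    show ?thesis unfolding all_split e using out_diff_oppmw[OF assms] by simp
  qed
  show "card {g\<in>Gall. opp_men_in u v g} = 1"
  proof -
    have e: "{g\<in>Gin. opp_men_in u v g} = {}" using inner_diff[of "opp_men_in u v" u v] gset_preds(3) assms(3) by blast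
    show ?thesis unfolding all_split e using out_diff_oppmen[OF assms] by simp
  qed
  show "card {g\<in>Gall. opp_women_in u v g} = 1"
  proof -
    have e: "{g\<in>Gin. opp_women_in u v g} = {}" using inner_diff[of "opp_women_in u v" u v] gset_preds(4) assms(3) by blast
    show ?thesis unfolding all_split e using out_diff_oppwomen[OF assms] by simp
  qed
qed

end


context comb
begin

lemma Sall_fst: assumes "m\<in>X" shows "m \<in> fst ` Sall \<longleftrightarrow> m \<in> fst ` S (hole m)"
proof
  assume "m \<in> fst ` Sall"
  then obtain t w where t: "t\<in>I" "(m,w)\<in>S t" unfolding Sall_def by force
  then have "m \<in> Hf t" using S_sub by blast
  then have "t = hole m" using hole_eq[OF t(1)] by simp
  then show "m \<in> fst ` S (hole m)" using t by force
next
  assume "m \<in> fst ` S (hole m)"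
  then show "m \<in> fst ` Sall" using hole[OF assms] unfolding Sall_def by blast
qed

lemma Sall_snd: assumes "m\<in>X" shows "m \<in> snd ` Sall \<longleftrightarrow> m \<in> snd ` S (hole m)"
proof
  assume "m \<in> snd ` Sall"
  then obtain t w where t: "t\<in>I" "(w,m)\<in>S t" unfolding Sall_def by force
  then have "m \<in> Hf t" using S_sub by blast
  then have "t = hole m" using hole_eq[OF t(1)] by simp
  then show "m \<in> snd ` S (hole m)" using t by force
next
  assume "m \<in> snd ` S (hole m)"
  then show "m \<in> snd ` Sall" using hole[OF assms] unfolding Sall_def by blast
qed

lemma Sall_mem: assumes "m\<in>X" "w\<in>X" "hole m = hole w"
  shows "(m,w) \<in> Sall \<longleftrightarrow> (m,w) \<in> S (hole m)"
proof
  assume "(m,w) \<in> Sall"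
  then obtain t where t: "t\<in>I" "(m,w)\<in>S t" unfolding Sall_def by force
  then have "m \<in> Hf t" using S_sub by blast
  then have "t = hole m" using hole_eq[OF t(1)] by simp
  then show "(m,w) \<in> S (hole m)" using t by simp
next
  assume "(m,w) \<in> S (hole m)"
  then show "(m,w) \<in> Sall" using hole[OF assms(1)] unfolding Sall_def by blast
qed

lemma finGall: "finite Gall"
proof -
  have "finite Gin" unfolding Gin_def using finI is_CMDRR_onD(1)[OF sub] by blast
  moreover have "P \<subseteq> X \<times> X" unfolding P_def by auto
  then have "finite P" using finX by (meson finite_SigmaI finite_subset)
  then have "finite Gout" unfolding Gout_def by simp
  ultimately show ?thesis unfolding Gall_def by simp
qed

lemma Gall_ent0: assumes g: "g \<in> Gall" and gg: "g = ((a,b),(c,d))"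
  shows "a \<in> X \<and> b \<in> X \<and> c \<in> X \<and> d \<in> X \<and> a \<noteq> c \<and> b \<noteq> d"
  proof (cases "g \<in> Gin")
    case True
    then obtain t where t: "t\<in>I" "g \<in> G t" unfolding Gin_def by auto
    have "\<forall>((a,b),(c,d)) \<in> G t. a \<in> Hf t \<and> b \<in> Hf t \<and> c \<in> Hf t \<and> d \<in> Hf t \<and> a \<noteq> c \<and> b \<noteq> d"
      using is_CMDRR_onD(2)[OF sub[OF t(1)]] .
    then have "a \<in> Hf t \<and> b \<in> Hf t \<and> c \<in> Hf t \<and> d \<in> Hf t \<and> a \<noteq> c \<and> b \<noteq> d" using t(2) unfolding gg by fastforce
    then show ?thesis using HX[OF t(1)] by blast
  next
    case False
    then have "g \<in> Gout" using g unfolding Gall_def by simp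
    then obtain x y where xy: "(x,y)\<in>P" "g = out L x y" unfolding Gout_def by auto
    have f: "x\<in>X" "y\<in>X" using xy(1) unfolding P_def by auto
    show ?thesis using xy(2) gg LP[OF xy(1)] LP[OF LP(7)[OF xy(1)]] f unfolding out_def
      by (auto split: if_splits)
  qed

lemma Gall_ent: "\<forall>((a,b),(c,d)) \<in> Gall. a \<in> X \<and> b \<in> X \<and> c \<in> X \<and> d \<in> X \<and> a \<noteq> c \<and> b \<noteq> d"
  using Gall_ent0 by fast

lemma Sall_sub: "Sall \<subseteq> X \<times> X"
  unfolding Sall_def using S_sub HX by blast

lemma Sall_match: "\<forall>(m,w) \<in> Sall. \<forall>(m',w') \<in> Sall. (m = m' \<longleftrightarrow> w = w')"
proof -
  have *: "(m = m') = (w = w')" if mw: "(m,w)\<in>Sall" "(m',w')\<in>Sall" for m w m' w'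
  proof -
    obtain t t' where t: "t\<in>I" "(m,w)\<in>S t" "t'\<in>I" "(m',w')\<in>S t'"
      using mw unfolding Sall_def by blast
    show ?thesis
    proof (cases "t = t'")
      case True
      then show ?thesis using is_CMDRR_onD(4)[OF sub[OF t(1)]] t by blast
    next
      case False
      have "m\<in>Hf t" "w\<in>Hf t" "m'\<in>Hf t'" "w'\<in>Hf t'" using S_sub t by blast+
      then show ?thesis using disj[OF t(1) t(3) False] by blast
    qed
  qed
  show ?thesis using * by auto
qed

lemma Sall_noplay: "\<forall>(m,w) \<in> Sall. \<forall>g \<in> Gall. \<not> (plays_man m g \<and> plays_woman w g)"
proof -
  have *: False if H: "(m,w)\<in>Sall" "g\<in>Gall" "plays_man m g" "plays_woman w g" for m w g
  proof -
    obtain t where t: "t\<in>I" "(m,w)\<in>S t" using H(1) unfolding Sall_def by blast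
    have mw: "m\<in>Hf t" "w\<in>Hf t" using S_sub t by blast+
    show False
    proof (cases "g \<in> Gin")
      case True
      then obtain t' where t': "t'\<in>I" "g \<in> G t'" unfolding Gin_def by auto
      show False
      proof (cases "t = t'")
        case True
        then show ?thesis using is_CMDRR_onD(5)[OF sub[OF t(1)]] t t' H by blast
      next
        case False
        have "m \<in> Hf t'" using gset_preds(5)[OF H(3)] Gin_gset[OF t'] by blast
        then show ?thesis using mw disj[OF t(1) t'(1) False] by blast
      qed
    next
      case False
      then have "g \<in> Gout" using H unfolding Gall_def by simp
      then obtain x y where xy: "(x,y)\<in>P" "g = out L x y" unfolding Gout_def by auto
      have hm: "hole m = t" "hole w = t" using hole_eq[OF t(1)] mw by auto
      show False using H(3,4) xy(2) hm LP[OF xy(1)] LP[OF LP(7)[OF xy(1)]]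
        by (auto simp: out_preds)
    qed
  qed
  show ?thesis using * by blast
qed

lemma C1: "\<forall>m \<in> X. \<forall>w \<in> X. (m,w) \<notin> Sall \<longrightarrow>
        card {g \<in> Gall. partners_in m w g} = 1 \<and> card {g \<in> Gall. opp_mw_in m w g} = 1"
proof (intro ballI impI)
  fix m w assume mw: "m\<in>X" "w\<in>X" "(m,w) \<notin> Sall"
  show "card {g \<in> Gall. partners_in m w g} = 1 \<and> card {g \<in> Gall. opp_mw_in m w g} = 1"
  proof (cases "hole m = hole w")
    case True
    have h: "hole m \<in> I" "m \<in> Hf (hole m)" "w \<in> Hf (hole m)" using hole[OF mw(1)] hole[OF mw(2)] True by auto
    have "(m,w) \<notin> S (hole m)" using Sall_mem[OF mw(1,2) True] mw(3) by simp
    then show ?thesis unfolding same_all[OF mw(1,2) True]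
      using is_CMDRR_onD(6)[OF sub[OF h(1)]] h by blast
  next
    case False
    then show ?thesis using diff_all[OF mw(1,2) False] by simp
  qed
qed

lemma C2: "\<forall>m \<in> X. m \<in> fst ` Sall \<longrightarrow>
        (\<forall>m' \<in> X. m' \<noteq> m \<longrightarrow> card {g \<in> Gall. opp_men_in m m' g} = 1)"
proof (intro ballI impI)
  fix m m' assume mw: "m\<in>X" "m \<in> fst ` Sall" "m'\<in>X" "m' \<noteq> m"
  show "card {g \<in> Gall. opp_men_in m m' g} = 1"
  proof (cases "hole m = hole m'")
    case True
    have h: "hole m \<in> I" "m \<in> Hf (hole m)" "m' \<in> Hf (hole m)" using hole[OF mw(1)] hole[OF mw(3)] True by auto
    have "m \<in> fst ` S (hole m)" using Sall_fst[OF mw(1)] mw(2) by simp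
    then show ?thesis unfolding same_all[OF mw(1,3) True]
      using is_CMDRR_onD(7)[OF sub[OF h(1)]] h mw(4) by blast
  next
    case False
    then show ?thesis using diff_all[OF mw(1,3) False] by simp
  qed
qed

lemma C3: "\<forall>m \<in> X. m \<in> snd ` Sall \<longrightarrow>
        (\<forall>m' \<in> X. m' \<noteq> m \<longrightarrow> card {g \<in> Gall. opp_women_in m m' g} = 1)"
proof (intro ballI impI)
  fix m m' assume mw: "m\<in>X" "m \<in> snd ` Sall" "m'\<in>X" "m' \<noteq> m"
  show "card {g \<in> Gall. opp_women_in m m' g} = 1"
  proof (cases "hole m = hole m'")
    case True
    have h: "hole m \<in> I" "m \<in> Hf (hole m)" "m' \<in> Hf (hole m)" using hole[OF mw(1)] hole[OF mw(3)] True by auto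
    have "m \<in> snd ` S (hole m)" using Sall_snd[OF mw(1)] mw(2) by simp
    then show ?thesis unfolding same_all[OF mw(1,3) True]
      using is_CMDRR_onD(8)[OF sub[OF h(1)]] h mw(4) by blast
  next
    case False
    then show ?thesis using diff_all[OF mw(1,3) False] by simp
  qed
qed

lemma C4: "\<forall>m \<in> X. m \<notin> fst ` Sall \<longrightarrow>
        (\<exists>m' \<in> X. m' \<noteq> m \<and> m' \<notin> fst ` Sall \<and> card {g \<in> Gall. opp_men_in m m' g} = 2 \<and>
           (\<forall>m'' \<in> X. m'' \<noteq> m \<and> m'' \<noteq> m' \<longrightarrow> card {g \<in> Gall. opp_men_in m m'' g} = 1))"
proof (intro ballI impI)
  fix m assume m: "m\<in>X" "m \<notin> fst ` Sall"
  have h: "hole m \<in> I" "m \<in> Hf (hole m)" using hole[OF m(1)] by auto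
  have "m \<notin> fst ` S (hole m)" using Sall_fst[OF m(1)] m(2) by simp
  then obtain m' where m': "m' \<in> Hf (hole m)" "m' \<noteq> m" "m' \<notin> fst ` S (hole m)"
    "card {g \<in> G (hole m). opp_men_in m m' g} = 2"
    "\<forall>m'' \<in> Hf (hole m). m'' \<noteq> m \<and> m'' \<noteq> m' \<longrightarrow> card {g \<in> G (hole m). opp_men_in m m'' g} = 1"
    using is_CMDRR_onD(9)[OF sub[OF h(1)]] h(2) by blast
  have m'X: "m' \<in> X" using HX[OF h(1)] m'(1) by blast
  have hm': "hole m' = hole m" using hole_eq[OF h(1) m'(1)] .
  show "\<exists>m' \<in> X. m' \<noteq> m \<and> m' \<notin> fst ` Sall \<and> card {g \<in> Gall. opp_men_in m m' g} = 2 \<and>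
           (\<forall>m'' \<in> X. m'' \<noteq> m \<and> m'' \<noteq> m' \<longrightarrow> card {g \<in> Gall. opp_men_in m m'' g} = 1)"
  proof (rule bexI[OF _ m'X], intro conjI ballI impI)
    show "m' \<noteq> m" by fact
    show "m' \<notin> fst ` Sall" using Sall_fst[OF m'X] hm' m'(3) by simp
    show "card {g \<in> Gall. opp_men_in m m' g} = 2"
      using same_all(3)[OF m(1) m'X hm'[symmetric]] m'(4) by simp
    fix m'' assume m'': "m'' \<in> X" "m'' \<noteq> m \<and> m'' \<noteq> m'"
    show "card {g \<in> Gall. opp_men_in m m'' g} = 1"
    proof (cases "hole m = hole m''")
      case True
      have "m'' \<in> Hf (hole m)" using hole[OF m''(1)] True by simp
      then show ?thesis using same_all(3)[OF m(1) m''(1) True] m'(5) m''(2) by simp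
    next
      case False
      then show ?thesis using diff_all(3)[OF m(1) m''(1) False] by simp
    qed
  qed
qed

lemma C5: "\<forall>m \<in> X. m \<notin> snd ` Sall \<longrightarrow>
        (\<exists>m' \<in> X. m' \<noteq> m \<and> m' \<notin> snd ` Sall \<and> card {g \<in> Gall. opp_women_in m m' g} = 2 \<and>
           (\<forall>m'' \<in> X. m'' \<noteq> m \<and> m'' \<noteq> m' \<longrightarrow> card {g \<in> Gall. opp_women_in m m'' g} = 1))"
proof (intro ballI impI)
  fix m assume m: "m\<in>X" "m \<notin> snd ` Sall"
  have h: "hole m \<in> I" "m \<in> Hf (hole m)" using hole[OF m(1)] by auto
  have "m \<notin> snd ` S (hole m)" using Sall_snd[OF m(1)] m(2) by simp
  then obtain m' where m': "m' \<in> Hf (hole m)" "m' \<noteq> m" "m' \<notin> snd ` S (hole m)"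
    "card {g \<in> G (hole m). opp_women_in m m' g} = 2"
    "\<forall>m'' \<in> Hf (hole m). m'' \<noteq> m \<and> m'' \<noteq> m' \<longrightarrow> card {g \<in> G (hole m). opp_women_in m m'' g} = 1"
    using is_CMDRR_onD(10)[OF sub[OF h(1)]] h(2) by blast
  have m'X: "m' \<in> X" using HX[OF h(1)] m'(1) by blast
  have hm': "hole m' = hole m" using hole_eq[OF h(1) m'(1)] .
  show "\<exists>m' \<in> X. m' \<noteq> m \<and> m' \<notin> snd ` Sall \<and> card {g \<in> Gall. opp_women_in m m' g} = 2 \<and>
           (\<forall>m'' \<in> X. m'' \<noteq> m \<and> m'' \<noteq> m' \<longrightarrow> card {g \<in> Gall. opp_women_in m m'' g} = 1)"
  proof (rule bexI[OF _ m'X], intro conjI ballI impI)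
    show "m' \<noteq> m" by fact
    show "m' \<notin> snd ` Sall" using Sall_snd[OF m'X] hm' m'(3) by simp
    show "card {g \<in> Gall. opp_women_in m m' g} = 2"
      using same_all(4)[OF m(1) m'X hm'[symmetric]] m'(4) by simp
    fix m'' assume m'': "m'' \<in> X" "m'' \<noteq> m \<and> m'' \<noteq> m'"
    show "card {g \<in> Gall. opp_women_in m m'' g} = 1"
    proof (cases "hole m = hole m''")
      case True
      have "m'' \<in> Hf (hole m)" using hole[OF m''(1)] True by simp
      then show ?thesis using same_all(4)[OF m(1) m''(1) True] m'(5) m''(2) by simp
    next
      case False
      then show ?thesis using diff_all(4)[OF m(1) m''(1) False] by simp
    qed
  qed
qed

theorem comb_main: "is_CMDRR_on X Sall Gall"
  unfolding is_CMDRR_on_def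
  using finGall Gall_ent Sall_sub Sall_match Sall_noplay C1 C2 C3 C4 C5 by (intro conjI)

lemma card_Sall: "card Sall = (\<Sum>t\<in>I. card (S t))"
  unfolding Sall_def
proof (rule card_UN_disjoint[OF finI])
  show "\<forall>t\<in>I. finite (S t)"
  proof
    fix t assume t: "t\<in>I"
    have "finite (Hf t \<times> Hf t)" using HX[OF t] finX by (meson finite_SigmaI finite_subset)
    then show "finite (S t)" using S_sub[OF t] by (rule finite_subset[rotated])
  qed
  show "\<forall>i\<in>I. \<forall>j\<in>I. i \<noteq> j \<longrightarrow> S i \<inter> S j = {}"
    using S_sub disj by blast
qed

end


theorem theorem1:
  fixes k :: nat and h nn :: "nat \<Rightarrow> nat" and m :: "nat \<Rightarrow> nat \<Rightarrow> nat"
  assumes "HSOLS_type_exists k h nn"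
    and "\<forall>i \<in> {1..k}. \<forall>j \<in> {1..nn i}. CMDRR_exists (h i) (m i j)"
  shows "CMDRR_exists (\<Sum>i=1..k. nn i * h i) (\<Sum>i=1..k. \<Sum>j=1..nn i. m i j)"
proof -
  let ?N = "\<Sum>i=1..k. nn i * h i"
  let ?I = "{(i,j). i \<in> {1..k} \<and> j \<in> {1..nn i}}"
  obtain Hf L where hs: "is_HSOLS {0..<?N} ?I Hf L"
    and cardH: "\<forall>i\<in>{1..k}. \<forall>j\<in>{1..nn i}. card (Hf (i,j)) = h i"
    using assms(1) unfolding HSOLS_type_exists_def by blast
  have Ieq: "?I = Sigma {1..k} (\<lambda>i. {1..nn i})" by auto
  have finI: "finite ?I" unfolding Ieq by simp
  have ex: "\<exists>St Gt. is_CMDRR_on (Hf t) St Gt \<and> card St = m (fst t) (snd t)" if t: "t \<in> ?I" for t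
  proof -
    obtain i j where ij: "t = (i,j)" "i\<in>{1..k}" "j\<in>{1..nn i}" using t by auto
    obtain S0 G0 where "is_CMDRR (h i) (m i j) S0 G0"
      using assms(2) ij unfolding CMDRR_exists_def by blast
    then have c: "is_CMDRR_on {0..<h i} S0 G0" "card S0 = m i j" using CMDRR_on_iff by auto
    have "Hf t \<subseteq> {0..<?N}" using hs t unfolding is_HSOLS_def by blast
    then have "finite (Hf t)" using finite_subset by blast
    then obtain f where f: "bij_betw f {0..<card (Hf t)} (Hf t)" using ex_bij_betw_nat_finite by blast
    have ch: "card (Hf t) = h i" using cardH ij by simp
    have inj: "inj_on f {0..<h i}" and img: "f ` {0..<h i} = Hf t" using f ch unfolding bij_betw_def by auto
    have T: "is_CMDRR_on (Hf t) (map_prod f f ` S0) (gmap f ` G0)"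
      using transfer[OF c(1) inj] img by simp
    have "S0 \<subseteq> {0..<h i} \<times> {0..<h i}" using is_CMDRR_onD(3)[OF c(1)] .
    then have "inj_on (map_prod f f) S0" using map_prod_inj_on[OF inj inj] inj_on_subset by blast
    then have "card (map_prod f f ` S0) = m i j" using c(2) card_image by metis
    then show ?thesis using T ij by auto
  qed
  obtain S G where SG: "\<And>t. t \<in> ?I \<Longrightarrow> is_CMDRR_on (Hf t) (S t) (G t) \<and> card (S t) = m (fst t) (snd t)"
    using ex by metis
  interpret C: comb "{0..<?N}" ?I Hf L S G
    using hs finI SG by unfold_locales auto
  have "(\<Sum>t\<in>?I. card (S t)) = (\<Sum>t\<in>?I. m (fst t) (snd t))" using SG by (intro sum.cong) auto
  also have "\<dots> = (\<Sum>(i,j)\<in>Sigma {1..k} (\<lambda>i. {1..nn i}). m i j)" unfolding Ieq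
    by (intro sum.cong) auto
  also have "\<dots> = (\<Sum>i=1..k. \<Sum>j=1..nn i. m i j)" by (subst sum.Sigma) auto
  finally have cs: "card C.Sall = (\<Sum>i=1..k. \<Sum>j=1..nn i. m i j)" using C.card_Sall by simp
  show ?thesis unfolding CMDRR_exists_def CMDRR_on_iff using C.comb_main cs by blast
qed


end
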